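(* For all $m = 1,2,\ldots$ and all $r = 0,1,\ldots,m$, the stopping redundancy of the binary Reed–Muller code $\mathcal{R}(r,m)$ satisfies $$\rho(\mathcal{R}(r,m)) \le \sum_{i=0}^{m-r-1} \binom{r+i}{i} 2^i.$$
   Context: The binary Reed–Muller code $\mathcal{R}(r,m)$ of order $r$ and length $2^m$ is the row space of $G(r,m)$, where $G(m,m) = I_{2^m}$, $G(0,m) = (11\cdots1)$, and for $0<r<m$, $G(r,m) = \begin{pmatrix} G(r,m-1) & G(r,m-1) \\ \mathbf{0} & G(r-1,m-1)\end{pmatrix}$; its minimum distance is $2^{m-r}$. A parity-check matrix for a linear code $\mathcal{C}$ is any matrix (possibly with linearly dependent rows) whose rows span $\mathcal{C}^\perp$. For a parity-check matrix $H$, the stopping distance $s(H)$ is the largest integer such that for every set of $s(H)-1$ or fewer columns of $H$, the projection of $H$ onto those columns contains at least one row of Hamming weight exactly one. The stopping redundancy $\rho(\mathcal{C})$ is the smallest number of rows of a parity-check matrix $H$ for $\mathcal{C}$ with $s(H)$ equal to the minimum distance of $\mathcal{C}$. *)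

theory Defs
  imports Main
begin

text \<open>Binary words of length n are bool lists (True = 1, False = 0).\<close>

definition identity_rows :: "nat \<Rightarrow> bool list list" where
  "identity_rows n = map (\<lambda>i. map (\<lambda>j. i = j) [0..<n]) [0..<n]"

fun RM_gen :: "nat \<Rightarrow> nat \<Rightarrow> bool list list" where
  "RM_gen r 0 = (if r = 0 then [[True]] else [])"
| "RM_gen r (Suc m) =
     (if r = Suc m then identity_rows (2 ^ Suc m)
      else if r = 0 then [replicate (2 ^ Suc m) True]
      else if r < Suc m then
        map (\<lambda>u. u @ u) (RM_gen r m) @ map (\<lambda>v. replicate (2 ^ m) False @ v) (RM_gen (r - 1) m)
      else [])"

definition row_space :: "nat \<Rightarrow> bool list list \<Rightarrow> bool list set" where
  "row_space n rows =
     {v. \<exists>c :: nat \<Rightarrow> bool.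
           v = map (\<lambda>j. odd (card {i. i < length rows \<and> c i \<and> rows ! i ! j})) [0..<n]}"

definition RM_code :: "nat \<Rightarrow> nat \<Rightarrow> bool list set" where
  "RM_code r m = row_space (2 ^ m) (RM_gen r m)"

definition gf2_inner :: "bool list \<Rightarrow> bool list \<Rightarrow> bool" where
  "gf2_inner u v = odd (card {i. i < length u \<and> u ! i \<and> v ! i})"

definition dual_code :: "nat \<Rightarrow> bool list set \<Rightarrow> bool list set" where
  "dual_code n C = {v. length v = n \<and> (\<forall>c\<in>C. \<not> gf2_inner c v)}"

definition hweight :: "bool list \<Rightarrow> nat" where
  "hweight v = length (filter id v)"

definition min_distance :: "nat \<Rightarrow> bool list set \<Rightarrow> nat" where
  "min_distance n C = (LEAST w. \<exists>c\<in>C. c \<noteq> replicate n False \<and> hweight c = w)"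

text \<open>H (list of rows, possibly dependent) is a parity-check matrix for the length-n code C.\<close>
definition is_parity_check :: "nat \<Rightarrow> bool list set \<Rightarrow> bool list list \<Rightarrow> bool" where
  "is_parity_check n C H \<longleftrightarrow> (\<forall>h\<in>set H. length h = n) \<and> row_space n H = dual_code n C"

definition stop_ok :: "nat \<Rightarrow> bool list list \<Rightarrow> nat \<Rightarrow> bool" where
  "stop_ok n H s \<longleftrightarrow>
     (\<forall>S. S \<subseteq> {..<n} \<and> S \<noteq> {} \<and> card S \<le> s - 1 \<longrightarrow>
          (\<exists>h\<in>set H. card {j\<in>S. h ! j} = 1))"

definition stopping_distance_is :: "nat \<Rightarrow> bool list list \<Rightarrow> nat \<Rightarrow> bool" where
  "stopping_distance_is n H d \<longleftrightarrow> stop_ok n H d \<and> \<not> stop_ok n H (Suc d)"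

definition stopping_redundancy :: "nat \<Rightarrow> bool list set \<Rightarrow> nat" where
  "stopping_redundancy n C =
     (LEAST k. \<exists>H. length H = k \<and> is_parity_check n C H \<and>
                   stopping_distance_is n H (min_distance n C))"

end

theory Submission
  imports Defs
begin


definition vx :: "bool list \<Rightarrow> bool list \<Rightarrow> bool list" where
  "vx u v = map (\<lambda>j. u!j \<noteq> v!j) [0..<length u]"

abbreviation zs :: "nat \<Rightarrow> bool list" where "zs n \<equiv> replicate n False"

lemma length_vx[simp]: "length (vx u v) = length u" by (simp add: vx_def)
lemma nth_vx[simp]: "j < length u \<Longrightarrow> vx u v ! j = (u!j \<noteq> v!j)" by (simp add: vx_def)

lemma vx_zl: "length v = n \<Longrightarrow> vx (zs n) v = v"
  by (rule nth_equalityI) auto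
lemma vx_zr: "length v = n \<Longrightarrow> vx v (zs n) = v"
  by (rule nth_equalityI) auto
lemma vx_comm: "length u = length v \<Longrightarrow> vx u v = vx v u"
  by (rule nth_equalityI) auto
lemma vx_assoc: "length u = length v \<Longrightarrow> vx (vx u v) w = vx u (vx v w)"
  by (rule nth_equalityI) auto
lemma vx_self: "vx u u = zs (length u)"
  by (rule nth_equalityI) auto
lemma vx_append: "length a = length c \<Longrightarrow> length b = length d \<Longrightarrow> vx (a@b) (c@d) = vx a c @ vx b d"
  by (rule nth_equalityI) (auto simp: nth_append)

fun spn :: "nat \<Rightarrow> bool list list \<Rightarrow> bool list set" where
  "spn n [] = {zs n}"
| "spn n (h#hs) = spn n hs \<union> (vx h) ` spn n hs"

definition rowsn :: "nat \<Rightarrow> bool list list \<Rightarrow> bool" where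
  "rowsn n hs \<longleftrightarrow> (\<forall>h\<in>set hs. length h = n)"

lemma rowsn_simps[simp]: "rowsn n [] " "rowsn n (h#hs) \<longleftrightarrow> length h = n \<and> rowsn n hs"
  "rowsn n (A@B) \<longleftrightarrow> rowsn n A \<and> rowsn n B"
  by (auto simp: rowsn_def)

lemma spn_len: "rowsn n hs \<Longrightarrow> v \<in> spn n hs \<Longrightarrow> length v = n"
  by (induction hs arbitrary: v) auto

lemma spn_zero: "zs n \<in> spn n hs"
  by (induction hs) auto

lemma spn_add: "rowsn n hs \<Longrightarrow> a \<in> spn n hs \<Longrightarrow> b \<in> spn n hs \<Longrightarrow> vx a b \<in> spn n hs"
proof (induction hs arbitrary: a b)
  case Nil then show ?case by (auto simp: vx_self)
next
  case (Cons h hs)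
  have L: "\<And>x. x \<in> spn n hs \<Longrightarrow> length x = n" using Cons.prems(1) spn_len by auto
  from Cons.prems have hl: "length h = n" and r: "rowsn n hs" by auto
  from Cons.prems(2) obtain a' where a': "a' \<in> spn n hs" "a = a' \<or> a = vx h a'" by auto
  from Cons.prems(3) obtain b' where b': "b' \<in> spn n hs" "b = b' \<or> b = vx h b'" by auto
  have s: "vx a' b' \<in> spn n hs" using Cons.IH[OF r a'(1) b'(1)] .
  show ?case
  proof (cases "a = a'")
    case True
    show ?thesis
    proof (cases "b = b'")
      case True then show ?thesis using s \<open>a = a'\<close> by simp
    next
      case False
      then have "b = vx h b'" using b' by auto
      then have "vx a b = vx h (vx a' b')" using \<open>a = a'\<close> L a' b' hl
        by (metis vx_assoc vx_comm length_vx)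
      then show ?thesis using s by simp
    qed
  next
    case False
    then have aa: "a = vx h a'" using a' by auto
    show ?thesis
    proof (cases "b = b'")
      case True
      then have "vx a b = vx h (vx a' b')" using aa L a' b' hl
        by (metis vx_assoc)
      then show ?thesis using s by simp
    next
      case False
      then have bb: "b = vx h b'" using b' by auto
      have "vx a b = vx (vx h a') (vx h b')" using aa bb by simp
      also have "\<dots> = vx a' b'"
      proof (rule nth_equalityI)
        show "length (vx (vx h a') (vx h b')) = length (vx a' b')" using L a' b' hl by simp
      next
        fix i assume "i < length (vx (vx h a') (vx h b'))"
        then show "vx (vx h a') (vx h b') ! i = vx a' b' ! i" using L a' b' hl by auto
      qed
      finally show ?thesis using s by simp
    qed
  qed
qed

lemma spn_row: "rowsn n hs \<Longrightarrow> h \<in> set hs \<Longrightarrow> h \<in> spn n hs"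
proof (induction hs)
  case Nil then show ?case by simp
next
  case (Cons g hs)
  show ?case
  proof (cases "h = g")
    case True
    have "vx g (zs n) \<in> spn n (g#hs)" using spn_zero by auto
    then show ?thesis using True Cons.prems vx_zr by auto
  next
    case False then show ?thesis using Cons by auto
  qed
qed

lemma spn_min: "zs n \<in> V \<Longrightarrow> (\<And>a b. a \<in> V \<Longrightarrow> b \<in> V \<Longrightarrow> vx a b \<in> V) \<Longrightarrow> set hs \<subseteq> V \<Longrightarrow> spn n hs \<subseteq> V"
  by (induction hs) auto

lemma spn_appL: "rowsn n A \<Longrightarrow> rowsn n B \<Longrightarrow> spn n A \<subseteq> spn n (A@B)"
  by (rule spn_min) (auto intro: spn_zero spn_add spn_row)
lemma spn_appR: "rowsn n A \<Longrightarrow> rowsn n B \<Longrightarrow> spn n B \<subseteq> spn n (A@B)"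
  by (rule spn_min) (auto intro: spn_zero spn_add spn_row)

lemma spn_map:
  assumes r: "rowsn n A"
    and fl: "\<And>a. length a = n \<Longrightarrow> length (f a) = n'"
    and f0: "f (zs n) = zs n'"
    and fa: "\<And>a b. length a = n \<Longrightarrow> length b = n \<Longrightarrow> f (vx a b) = vx (f a) (f b)"
    and v: "v \<in> spn n A"
  shows "f v \<in> spn n' (map f A)"
proof -
  have rr: "rowsn n' (map f A)" using r fl by (auto simp: rowsn_def)
  have "spn n A \<subseteq> {v. length v = n \<and> f v \<in> spn n' (map f A)}"
  proof (rule spn_min)
    show "zs n \<in> {v. length v = n \<and> f v \<in> spn n' (map f A)}" using f0 spn_zero by auto
  next
    fix a b assume "a \<in> {v. length v = n \<and> f v \<in> spn n' (map f A)}" "b \<in> {v. length v = n \<and> f v \<in> spn n' (map f A)}"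
    then show "vx a b \<in> {v. length v = n \<and> f v \<in> spn n' (map f A)}" using fa spn_add[OF rr] by auto
  next
    show "set A \<subseteq> {v. length v = n \<and> f v \<in> spn n' (map f A)}" using r rr spn_row by (auto simp: rowsn_def)
  qed
  then show ?thesis using v by auto
qed




lemma card_less_Suc_split:
  "card {i. i < Suc L \<and> P i} = (if P 0 then 1 else 0) + card {i. i < L \<and> P (Suc i)}"
proof -
  have e: "{i. i < Suc L \<and> P i} = (if P 0 then {0} else {}) \<union> Suc ` {i. i < L \<and> P (Suc i)}"
    by (auto simp: less_Suc_eq_0_disj)
  have "card (Suc ` {i. i < L \<and> P (Suc i)}) = card {i. i < L \<and> P (Suc i)}"
    by (rule card_image) auto
  then show ?thesis unfolding e by (auto simp: card_insert_if)
qed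

definition rv :: "nat \<Rightarrow> bool list list \<Rightarrow> (nat \<Rightarrow> bool) \<Rightarrow> bool list" where
  "rv n rows c = map (\<lambda>j. odd (card {i. i < length rows \<and> c i \<and> rows ! i ! j})) [0..<n]"

lemma row_space_rv: "row_space n rows = range (rv n rows)"
  by (auto simp: row_space_def rv_def)

lemma rv_cons: "length h = n \<Longrightarrow>
  rv n (h#hs) c = (if c 0 then vx h (rv n hs (c \<circ> Suc)) else rv n hs (c \<circ> Suc))"
  by (rule nth_equalityI) (auto simp: rv_def card_less_Suc_split)

lemma row_space_spn: "rowsn n rows \<Longrightarrow> row_space n rows = spn n rows"
proof (induction rows)
  case Nil
  then show ?case by (auto simp: row_space_def map_replicate_const)
next
  case (Cons h hs)
  then have hl: "length h = n" and IH: "range (rv n hs) = spn n hs"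
    by (auto simp: row_space_rv)
  have "range (rv n (h#hs)) = spn n (h#hs)"
  proof
    show "range (rv n (h#hs)) \<subseteq> spn n (h#hs)"
    proof
      fix v assume "v \<in> range (rv n (h#hs))"
      then obtain c where "v = rv n (h#hs) c" by auto
      then show "v \<in> spn n (h#hs)" using IH rv_cons[OF hl] by (cases "c 0") auto
    qed
  next
    show "spn n (h#hs) \<subseteq> range (rv n (h#hs))"
    proof
      fix v assume "v \<in> spn n (h#hs)"
      then have "\<exists>w b. w \<in> spn n hs \<and> v = (if b then vx h w else w)"
        by (metis (full_types) Un_iff image_iff spn.simps(2))
      then obtain w b where w: "w \<in> spn n hs" "v = (if b then vx h w else w)" by blast
      then obtain c' where c': "w = rv n hs c'" using IH by auto
      define c where "c = (\<lambda>i. case i of 0 \<Rightarrow> b | Suc k \<Rightarrow> c' k)"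
      have "c \<circ> Suc = c'" "c 0 = b" by (auto simp: c_def)
      then have "v = rv n (h#hs) c" using rv_cons[OF hl, where c=c and hs=hs] w c' by auto
      then show "v \<in> range (rv n (h#hs))" by auto
    qed
  qed
  then show ?case by (simp add: row_space_rv)
qed

abbreviation gi where "gi \<equiv> gf2_inner"

lemma gi_append: "length a = length c \<Longrightarrow> gi (a@b) (c@d) = (gi a c \<noteq> gi b d)"
proof -
  assume l: "length a = length c"
  let ?A = "{i. i < length a \<and> a!i \<and> c!i}" and ?B = "{i. i < length b \<and> b!i \<and> d!i}"
  have e: "{i. i < length (a@b) \<and> (a@b)!i \<and> (c@d)!i} = ?A \<union> (\<lambda>i. i + length a) ` ?B"
  proof (rule set_eqI)
    fix i
    show "i \<in> {i. i < length (a@b) \<and> (a@b)!i \<and> (c@d)!i} \<longleftrightarrow> i \<in> ?A \<union> (\<lambda>i. i + length a) ` ?B"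
      using l by (cases "i < length a") (auto simp: nth_append image_iff intro!: exI[of _ "i - length a"])
  qed
  have "card (?A \<union> (\<lambda>i. i + length a) ` ?B) = card ?A + card ((\<lambda>i. i + length a) ` ?B)"
    by (rule card_Un_disjoint) auto
  moreover have "card ((\<lambda>i. i + length a) ` ?B) = card ?B" by (rule card_image) (auto simp: inj_on_def)
  ultimately show ?thesis unfolding gf2_inner_def e by simp
qed

lemma gi_vx: "length u = n \<Longrightarrow> length v = n \<Longrightarrow> length w = n \<Longrightarrow> gi u (vx v w) = (gi u v \<noteq> gi u w)"
proof -
  assume l: "length u = n" "length v = n" "length w = n"
  define A where "A = {i. i < n \<and> u!i \<and> v!i}"
  define B where "B = {i. i < n \<and> u!i \<and> w!i}"
  have fA: "finite A" "finite B" by (auto simp: A_def B_def)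
  have e: "{i. i < length u \<and> u!i \<and> vx v w ! i} = (A - B) \<union> (B - A)"
    using l by (auto simp: A_def B_def)
  have c1: "card ((A - B) \<union> (B - A)) = card (A - B) + card (B - A)"
    by (rule card_Un_disjoint) (use fA in auto)
  have c2: "card A = card (A - B) + card (A \<inter> B)" using fA card_Int_Diff[of A B] by simp
  have c3: "card B = card (B - A) + card (A \<inter> B)" using fA card_Int_Diff[of B A] by (simp add: Int_commute)
  have "gi u (vx v w) = odd (card (A - B) + card (B - A))" unfolding gf2_inner_def e c1 ..
  moreover have "gi u v = odd (card A)" "gi u w = odd (card B)" using l by (auto simp: gf2_inner_def A_def B_def)
  ultimately show ?thesis using c2 c3 by auto
qed

lemma gi_sym: "length u = length v \<Longrightarrow> gi u v = gi v u"
  unfolding gf2_inner_def by (metis (no_types, lifting) Collect_cong)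

lemma gi_vx_l: "length u = n \<Longrightarrow> length v = n \<Longrightarrow> length w = n \<Longrightarrow> gi (vx v w) u = (gi v u \<noteq> gi w u)"
  by (metis gi_sym gi_vx length_vx)

lemma gi_zl: "gi (zs n) v = False"
proof -
  have e: "{i. i < n \<and> zs n ! i \<and> v!i} = {}" by auto
  show ?thesis unfolding gf2_inner_def length_replicate e by simp
qed
lemma gi_zr: "length u = n \<Longrightarrow> gi u (zs n) = False"
proof -
  assume "length u = n"
  have e: "{i. i < n \<and> u ! i \<and> zs n!i} = {}" by auto
  show ?thesis unfolding gf2_inner_def \<open>length u = n\<close> e by simp
qed




lemma rowsn_identity: "rowsn n (identity_rows n)"
  by (auto simp: rowsn_def identity_rows_def)

lemma RM_gen_len: "rowsn (2^m) (RM_gen r m)"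
proof (induction m arbitrary: r)
  case 0 then show ?case by simp
next
  case (Suc m)
  then show ?case by (auto simp: rowsn_def rowsn_identity[unfolded rowsn_def])
qed

lemma RM_gen_mm: "RM_gen m m = identity_rows (2^m)"
  by (cases m) (auto simp: identity_rows_def)

lemma RM_gen_0: "RM_gen 0 m = [replicate (2^m) True]"
  by (cases m) auto

lemma RM_gen_Suc: "r \<le> m \<Longrightarrow> RM_gen r (Suc m) = map (\<lambda>u. u@u) (RM_gen r m) @
   (if r = 0 then [] else map (\<lambda>v. zs (2^m) @ v) (RM_gen (r-1) m))"
proof (cases "r = 0")
  case True
  have e: "2^Suc m = 2^m + (2^m::nat)" by simp
  have "RM_gen r (Suc m) = [replicate (2^Suc m) True]" using True RM_gen_0 by blast
  also have "\<dots> = [replicate (2^m) True @ replicate (2^m) True]" by (simp only: e replicate_add)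
  finally show ?thesis using True RM_gen_0[of m] by simp
next
  case False
  assume "r \<le> m"
  then show ?thesis using False by (simp only: RM_gen.simps(2)) simp
qed

abbreviation CC where "CC r m \<equiv> spn (2^m) (RM_gen r m)"
abbreviation DD where "DD r m \<equiv> dual_code (2^m) (CC r m)"

lemma RM_code_spn: "RM_code r m = CC r m"
  by (simp add: RM_code_def row_space_spn RM_gen_len)

lemma CC_len: "c \<in> CC r m \<Longrightarrow> length c = 2^m"
  using spn_len RM_gen_len by blast

lemma dual_zero: "(\<And>c. c \<in> V \<Longrightarrow> length c = n) \<Longrightarrow> zs n \<in> dual_code n V"
  by (auto simp: dual_code_def gi_zr)
  
lemma dual_add: "(\<And>c. c \<in> V \<Longrightarrow> length c = n) \<Longrightarrow> a \<in> dual_code n V \<Longrightarrow> b \<in> dual_code n V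
   \<Longrightarrow> vx a b \<in> dual_code n V"
  by (auto simp: dual_code_def gi_vx)

lemma orth: assumes "rowsn n G" "length x = n" "\<And>h. h \<in> set G \<Longrightarrow> \<not> gi h x"
  shows "x \<in> dual_code n (spn n G)"
proof -
  have "spn n G \<subseteq> {c. length c = n \<and> \<not> gi c x}"
    apply (rule spn_min)
    using assms by (auto simp: gi_zl gi_vx_l rowsn_def)
  then show ?thesis using assms(2) by (auto simp: dual_code_def)
qed

lemma DD_len: "x \<in> DD r m \<Longrightarrow> length x = 2^m"
  by (simp add: dual_code_def)

lemma DD_zero: "zs (2^m) \<in> DD r m" by (rule dual_zero) (simp add: CC_len)
lemma DD_add: "a \<in> DD r m \<Longrightarrow> b \<in> DD r m \<Longrightarrow> vx a b \<in> DD r m"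
  by (rule dual_add) (auto simp: CC_len)

lemma dup_zero: "zs (2^m) @ zs (2^m) = zs (2^Suc m)"
proof -
  have e: "2^Suc m = 2^m + (2^m::nat)" by simp
  show ?thesis by (simp only: e replicate_add)
qed

lemma C_dup: assumes "r \<le> m" "u \<in> CC r m" shows "u@u \<in> CC r (Suc m)"
proof -
  have "u@u \<in> spn (2^Suc m) (map (\<lambda>u. u@u) (RM_gen r m))"
  proof (rule spn_map[where f="\<lambda>u. u@u" and n="2^m"])
    show "rowsn (2 ^ m) (RM_gen r m)" by (rule RM_gen_len)
    show "\<And>a. length a = 2 ^ m \<Longrightarrow> length (a @ a) = 2 ^ Suc m" by simp
    show "zs (2^m) @ zs (2^m) = zs (2^Suc m)" by (rule dup_zero)
    show "\<And>a b. length a = 2 ^ m \<Longrightarrow> length b = 2 ^ m \<Longrightarrow> vx a b @ vx a b = vx (a @ a) (b @ b)"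
      by (simp add: vx_append)
    show "u \<in> CC r m" by (rule assms(2))
  qed
  moreover have "spn (2^Suc m) (map (\<lambda>u. u@u) (RM_gen r m)) \<subseteq> CC r (Suc m)"
    unfolding RM_gen_Suc[OF assms(1)]
    apply (rule spn_appL)
    using RM_gen_len[of "Suc m" r] unfolding RM_gen_Suc[OF assms(1)] by simp_all
  ultimately show ?thesis by blast
qed

lemma C_shift: assumes "0 < r" "r \<le> m" "v \<in> CC (r-1) m" shows "zs (2^m) @ v \<in> CC r (Suc m)"
proof -
  have "zs (2^m) @ v \<in> spn (2^Suc m) (map (\<lambda>v. zs (2^m) @ v) (RM_gen (r-1) m))"
  proof (rule spn_map[where f="\<lambda>v. zs (2^m) @ v" and n="2^m"])
    show "rowsn (2 ^ m) (RM_gen (r-1) m)" by (rule RM_gen_len)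
    show "\<And>a. length a = 2 ^ m \<Longrightarrow> length (zs (2^m) @ a) = 2 ^ Suc m" by simp
    show "zs (2^m) @ zs (2^m) = zs (2^Suc m)" by (rule dup_zero)
    show "\<And>a b. length a = 2 ^ m \<Longrightarrow> length b = 2 ^ m \<Longrightarrow> zs (2^m) @ vx a b = vx (zs (2^m) @ a) (zs (2^m) @ b)"
      by (simp add: vx_append vx_self)
    show "v \<in> CC (r-1) m" by (rule assms(3))
  qed
  moreover have "spn (2^Suc m) (map (\<lambda>v. zs (2^m) @ v) (RM_gen (r-1) m)) \<subseteq> CC r (Suc m)"
    unfolding RM_gen_Suc[OF assms(2)] using assms(1)
    apply simp
    apply (rule spn_appR)
    using RM_gen_len[of "Suc m" r] unfolding RM_gen_Suc[OF assms(2)] using assms(1) by simp_all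
  ultimately show ?thesis by blast
qed

lemma Dchar: assumes "r \<le> m" "length a = 2^m" "length b = 2^m"
  shows "a@b \<in> DD r (Suc m) \<longleftrightarrow> vx a b \<in> DD r m \<and> (0 < r \<longrightarrow> b \<in> DD (r-1) m)"
proof
  assume ab: "a@b \<in> DD r (Suc m)"
  have 1: "vx a b \<in> DD r m"
    unfolding dual_code_def
  proof (intro CollectI conjI ballI)
    show "length (vx a b) = 2^m" using assms by simp
    fix c assume c: "c \<in> CC r m"
    have "\<not> gi (c@c) (a@b)" using ab C_dup[OF assms(1) c] by (auto simp: dual_code_def)
    then show "\<not> gi c (vx a b)" using c CC_len assms by (simp add: gi_append gi_vx)
  qed
  have 2: "b \<in> DD (r-1) m" if "0 < r"
    unfolding dual_code_def
  proof (intro CollectI conjI ballI)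
    show "length b = 2^m" using assms by simp
    fix c assume c: "c \<in> CC (r-1) m"
    have "\<not> gi (zs (2^m) @ c) (a@b)" using ab C_shift[OF that assms(1) c] by (auto simp: dual_code_def)
    then show "\<not> gi c b" using c CC_len assms by (simp add: gi_append gi_zl)
  qed
  show "vx a b \<in> DD r m \<and> (0 < r \<longrightarrow> b \<in> DD (r-1) m)" using 1 2 by blast
next
  assume h: "vx a b \<in> DD r m \<and> (0 < r \<longrightarrow> b \<in> DD (r-1) m)"
  show "a@b \<in> DD r (Suc m)"
  proof (rule orth)
    show "rowsn (2^Suc m) (RM_gen r (Suc m))" by (rule RM_gen_len)
    show "length (a@b) = 2^Suc m" using assms by simp
    fix g assume g: "g \<in> set (RM_gen r (Suc m))"
    show "\<not> gi g (a@b)"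
    proof (cases "g \<in> set (map (\<lambda>u. u@u) (RM_gen r m))")
      case True
      then obtain u where u: "u \<in> set (RM_gen r m)" "g = u@u" by auto
      then have uc: "u \<in> CC r m" using spn_row RM_gen_len by blast
      then have "\<not> gi u (vx a b)" using h by (auto simp: dual_code_def)
      then show ?thesis using u uc CC_len assms by (simp add: gi_append gi_vx)
    next
      case False
      then have r0: "0 < r" and "g \<in> set (map (\<lambda>v. zs (2^m) @ v) (RM_gen (r-1) m))"
        using g RM_gen_Suc[OF assms(1)] by (auto split: if_splits)
      then obtain v where v: "v \<in> set (RM_gen (r-1) m)" "g = zs (2^m) @ v" by auto
      then have vc: "v \<in> CC (r-1) m" using spn_row RM_gen_len by blast
      then have "\<not> gi v b" using h r0 by (auto simp: dual_code_def)
      then show ?thesis using v assms by (simp add: gi_append gi_zl)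
    qed
  qed
qed




lemma memb1: "rowsn (2^m) A \<Longrightarrow> y \<in> spn (2^m) A \<Longrightarrow> y @ zs (2^m) \<in> spn (2^Suc m) (map (\<lambda>y. y @ zs (2^m)) A)"
  apply (rule spn_map[where n="2^m"])
  by (simp_all add: dup_zero vx_append vx_self)

lemma memb2: "rowsn (2^m) A \<Longrightarrow> y \<in> spn (2^m) A \<Longrightarrow> zs (2^m) @ y \<in> spn (2^Suc m) (map (\<lambda>y. zs (2^m) @ y) A)"
  apply (rule spn_map[where n="2^m"])
  by (simp_all add: dup_zero vx_append vx_self)

lemma memb3: "rowsn (2^m) A \<Longrightarrow> y \<in> spn (2^m) A \<Longrightarrow> y @ y \<in> spn (2^Suc m) (map (\<lambda>y. y @ y) A)"
  apply (rule spn_map[where n="2^m"])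
  by (simp_all add: dup_zero vx_append vx_self)

lemma D_split: "x \<in> DD r (Suc m) \<Longrightarrow> \<exists>a b. x = a @ b \<and> length a = 2^m \<and> length b = 2^m"
proof -
  assume "x \<in> DD r (Suc m)"
  then have l: "length x = 2^m + 2^m" using DD_len by fastforce
  show ?thesis
    by (rule exI[of _ "take (2^m) x"], rule exI[of _ "drop (2^m) x"]) (simp add: l)
qed

lemma D_mm: "x \<in> DD m m \<Longrightarrow> x = zs (2^m)"
proof -
  assume x: "x \<in> DD m m"
  have l: "length x = 2^m" using x DD_len by blast
  show ?thesis
  proof (rule nth_equalityI)
    show "length x = length (zs (2^m))" using l by simp
    fix j assume j: "j < length x"
    let ?e = "map (\<lambda>i. j = i) [0..<2^m]"
    have "?e \<in> set (RM_gen m m)" using j l by (auto simp: RM_gen_mm identity_rows_def)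
    then have "?e \<in> CC m m" using spn_row RM_gen_len by blast
    then have ng: "\<not> gi ?e x" using x by (auto simp: dual_code_def)
    have "{i. i < length ?e \<and> ?e ! i \<and> x ! i} = (if x!j then {j} else {})" using j l by auto
    then have "gi ?e x = x!j" unfolding gf2_inner_def by simp
    then show "x ! j = zs (2^m) ! j" using ng j l by simp
  qed
qed

lemma D_mono: "1 \<le> r \<Longrightarrow> r \<le> m \<Longrightarrow> DD r m \<subseteq> DD (r-1) m"
proof (induction m arbitrary: r)
  case 0 then show ?case by simp
next
  case (Suc m)
  show ?case
  proof (cases "r = Suc m")
    case True
    then show ?thesis using D_mm DD_zero by (metis subsetI)
  next
    case False
    then have rm: "r \<le> m" using Suc.prems by simp
    show ?thesis
    proof
      fix x assume x: "x \<in> DD r (Suc m)"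
      then obtain a b where ab: "x = a @ b" "length a = 2^m" "length b = 2^m" using D_split by blast
      have h: "vx a b \<in> DD r m" "b \<in> DD (r-1) m" using Dchar[OF rm ab(2,3)] x ab(1) Suc.prems by auto
      have "vx a b \<in> DD (r-1) m" using Suc.IH[OF Suc.prems(1) rm] h(1) by blast
      moreover have "0 < r - 1 \<longrightarrow> b \<in> DD (r-1-1) m"
      proof
        assume "0 < r - 1"
        then have "DD (r-1) m \<subseteq> DD (r-1-1) m" using Suc.IH[of "r-1"] rm by simp
        then show "b \<in> DD (r-1-1) m" using h(2) by blast
      qed
      ultimately show "x \<in> DD (r-1) (Suc m)" using Dchar[of "r-1" m a b] rm ab by auto
    qed
  qed
qed

definition e0 :: "nat \<Rightarrow> bool list" where "e0 n = map (\<lambda>j. j = 0) [0..<n]"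

fun Hm :: "nat \<Rightarrow> nat \<Rightarrow> bool list list" where
  "Hm r 0 = []"
| "Hm r (Suc m) = (if Suc m \<le> r then [] else
     map (\<lambda>y. y @ zs (2^m)) (Hm r m) @ map (\<lambda>y. zs (2^m) @ y) (Hm r m) @
     map (\<lambda>x. x @ x) (if r = 0 then [e0 (2^m)] else Hm (r-1) m))"

lemma Hm_len: "rowsn (2^m) (Hm r m)"
  by (induction m arbitrary: r) (auto simp: rowsn_def e0_def)

lemma CC0: "CC 0 m = {zs (2^m), replicate (2^m) True}"
  by (auto simp: RM_gen_0 vx_zr)

lemma gi_ones_e0: "gi (replicate (2^m) True) (e0 (2^m))"
proof -
  have "{i. i < length (replicate (2^m) True) \<and> replicate (2^m) True ! i \<and> e0 (2^m) ! i} = {0}"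
    by (auto simp: e0_def)
  then show ?thesis unfolding gf2_inner_def by simp
qed

lemma Hm_span: "r \<le> m \<Longrightarrow> spn (2^m) (Hm r m) = DD r m"
proof (induction m arbitrary: r)
  case 0
  have "spn (2^0) (Hm r 0) = {zs (2^0)}" by simp
  also have "\<dots> = DD r 0"
  proof (intro equalityI subsetI)
    fix x assume "x \<in> {zs (2^0)}" then show "x \<in> DD r 0" using DD_zero by blast
  next
    fix x assume "x \<in> DD r 0" then show "x \<in> {zs (2^0)}" using D_mm[where m=0] 0 by simp
  qed
  finally show ?case .
next
  case (Suc m)
  show ?case
  proof (cases "r = Suc m")
    case True
    have "spn (2^Suc m) (Hm r (Suc m)) = {zs (2^Suc m)}" using True by (simp only: Hm.simps(2) if_True le_refl spn.simps)
    also have "\<dots> = DD r (Suc m)"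
    proof (intro equalityI subsetI)
      fix x assume "x \<in> {zs (2^Suc m)}" then show "x \<in> DD r (Suc m)" using DD_zero by blast
    next
      fix x assume "x \<in> DD r (Suc m)" then show "x \<in> {zs (2^Suc m)}" using D_mm[where m="Suc m"] True by simp
    qed
    finally show ?thesis .
  next
    case False
    then have rm: "r \<le> m" using Suc.prems by simp
    define K where "K = (if r = 0 then [e0 (2^m)] else Hm (r-1) m)"
    define A where "A = map (\<lambda>y. y @ zs (2^m)) (Hm r m)"
    define B where "B = map (\<lambda>y. zs (2^m) @ y) (Hm r m)"
    define C where "C = map (\<lambda>x. x @ x) K"
    have H: "Hm r (Suc m) = A @ B @ C" using rm unfolding A_def B_def C_def K_def
      by (simp only: Hm.simps(2)) simp
    have Kl: "rowsn (2^m) K" using Hm_len by (simp add: K_def e0_def)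
    have rA: "rowsn (2^Suc m) A" and rB: "rowsn (2^Suc m) B" and rC: "rowsn (2^Suc m) C"
      using Hm_len[of m r] Kl by (auto simp: A_def B_def C_def rowsn_def)
    have IH1: "spn (2^m) (Hm r m) = DD r m" using Suc.IH[OF rm] .
    have sA: "spn (2^Suc m) A \<subseteq> spn (2^Suc m) (Hm r (Suc m))" unfolding H
      using spn_appL rA rB rC by simp
    have sB: "spn (2^Suc m) B \<subseteq> spn (2^Suc m) (Hm r (Suc m))" unfolding H
      using spn_appL[of _ B C] spn_appR[of _ A "B@C"] rA rB rC by auto
    have sC: "spn (2^Suc m) C \<subseteq> spn (2^Suc m) (Hm r (Suc m))" unfolding H
      using spn_appR[of _ B C] spn_appR[of _ A "B@C"] rA rB rC by auto
    have KD: "set K \<subseteq> DD (r-1) m" if "0 < r"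
    proof -
      have "spn (2^m) (Hm (r-1) m) = DD (r-1) m" using Suc.IH[of "r-1"] rm by simp
      then show ?thesis using that spn_row[OF Hm_len] unfolding K_def by auto
    qed
    show ?thesis
    proof
      show "spn (2^Suc m) (Hm r (Suc m)) \<subseteq> DD r (Suc m)"
      proof (rule spn_min)
        show "zs (2^Suc m) \<in> DD r (Suc m)" by (rule DD_zero)
        show "\<And>a b. a \<in> DD r (Suc m) \<Longrightarrow> b \<in> DD r (Suc m) \<Longrightarrow> vx a b \<in> DD r (Suc m)"
          by (rule DD_add)
        show "set (Hm r (Suc m)) \<subseteq> DD r (Suc m)"
        proof
          fix g assume "g \<in> set (Hm r (Suc m))"
          then have "g \<in> set A \<or> g \<in> set B \<or> g \<in> set C" unfolding H by auto
          then show "g \<in> DD r (Suc m)"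
          proof (elim disjE)
            assume "g \<in> set A"
            then obtain y where y: "y \<in> set (Hm r m)" "g = y @ zs (2^m)" by (auto simp: A_def)
            have yD: "y \<in> DD r m" using y(1) IH1 spn_row[OF Hm_len] by blast
            have yl: "length y = 2^m" using yD DD_len by blast
            show ?thesis unfolding y(2) using Dchar[OF rm yl, of "zs (2^m)"] yD yl DD_zero vx_zr
              by simp
          next
            assume "g \<in> set B"
            then obtain y where y: "y \<in> set (Hm r m)" "g = zs (2^m) @ y" by (auto simp: B_def)
            have yD: "y \<in> DD r m" using y(1) IH1 spn_row[OF Hm_len] by blast
            have yl: "length y = 2^m" using yD DD_len by blast
            have "0 < r \<longrightarrow> y \<in> DD (r-1) m" using D_mono[of r m] rm yD by auto
            then show ?thesis unfolding y(2) using Dchar[OF rm _ yl, of "zs (2^m)"] yD yl vx_zl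
              by simp
          next
            assume "g \<in> set C"
            then obtain x where x: "x \<in> set K" "g = x @ x" by (auto simp: C_def)
            have xl: "length x = 2^m" using x(1) Kl by (auto simp: rowsn_def)
            have "0 < r \<longrightarrow> x \<in> DD (r-1) m" using KD x(1) by auto
            then show ?thesis unfolding x(2) using Dchar[OF rm xl xl] DD_zero xl vx_self[of x]
              by simp
          qed
        qed
      qed
    next
      show "DD r (Suc m) \<subseteq> spn (2^Suc m) (Hm r (Suc m))"
      proof
        fix x assume x: "x \<in> DD r (Suc m)"
        then obtain a b where ab: "x = a @ b" "length a = 2^m" "length b = 2^m" using D_split by blast
        have h: "vx a b \<in> DD r m" "0 < r \<longrightarrow> b \<in> DD (r-1) m" using Dchar[OF rm ab(2,3)] x ab(1) by auto
        let ?S = "spn (2^Suc m) (Hm r (Suc m))"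
        have rS: "rowsn (2^Suc m) (Hm r (Suc m))" by (rule Hm_len)
        have p1: "vx a b @ zs (2^m) \<in> ?S" using memb1[OF Hm_len, of "vx a b" m r] h(1) IH1 sA
          unfolding A_def by blast
        have p3: "y @ y \<in> ?S" if "y \<in> spn (2^m) K" for y
          using memb3[OF Kl that] sC unfolding C_def by blast
        have xe: "x = vx (vx a b @ zs (2^m)) (b @ b)"
          unfolding ab(1) using ab(2,3) by (intro nth_equalityI) (auto simp: nth_append)
        show "x \<in> ?S"
        proof (cases "r = 0")
          case False
          have "b \<in> spn (2^m) K" using h(2) False Suc.IH[of "r-1"] rm by (simp add: K_def)
          then show ?thesis using xe p1 p3 spn_add[OF rS] by metis
        next
          case True
          have D0: "DD 0 m = {v. length v = 2^m \<and> \<not> gi (replicate (2^m) True) v}"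
            by (auto simp: dual_code_def CC0 gi_zl)
          have sAB: "y @ zs (2^m) \<in> ?S \<and> zs (2^m) @ y \<in> ?S" if "y \<in> DD 0 m" for y
            using memb1[OF Hm_len, of y m r] memb2[OF Hm_len, of y m r] that IH1 sA sB True
            unfolding A_def B_def by blast
          have h1: "vx a b \<in> DD 0 m" using h(1) True by simp
          have vb: "vx (vx a b) b = a" using ab(2,3) by (intro nth_equalityI) auto
          show ?thesis
          proof (cases "b \<in> DD 0 m")
            case bD: True
            have aD: "a \<in> DD 0 m" using DD_add[OF h1 bD] True vb by simp
            have "x = vx (a @ zs (2^m)) (zs (2^m) @ b)"
              unfolding ab(1) using ab(2,3) by (intro nth_equalityI) (auto simp: nth_append)
            then show ?thesis using sAB aD bD spn_add[OF rS] by metis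
          next
            case bN: False
            have el: "length (e0 (2^m)) = 2^m" by (simp add: e0_def)
            have gb: "gi (replicate (2^m) True) b" using bN ab(3) D0 by auto
            have b'D: "vx b (e0 (2^m)) \<in> DD 0 m"
              unfolding D0 using gb gi_ones_e0[of m] ab(3) el by (simp add: gi_vx)
            have "vx (vx a (e0 (2^m))) (vx b (e0 (2^m))) = vx a b"
              using ab(2,3) el by (intro nth_equalityI) auto
            then have a'D: "vx a (e0 (2^m)) \<in> DD 0 m"
              using DD_add[OF h1 b'D] True ab(2,3) el
              by (metis (no_types, lifting) length_vx vx_assoc vx_self vx_zr)
            have ee: "e0 (2^m) @ e0 (2^m) \<in> ?S"
            proof -
              have "e0 (2^m) @ e0 (2^m) \<in> set C" using True by (simp add: C_def K_def)
              then show ?thesis using spn_row[OF rC] sC by blast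
            qed
            have "x = vx (vx (vx a (e0 (2^m)) @ zs (2^m)) (zs (2^m) @ vx b (e0 (2^m)))) (e0 (2^m) @ e0 (2^m))"
              unfolding ab(1) using ab(2,3) el by (intro nth_equalityI) (auto simp: nth_append)
            then show ?thesis using sAB[OF a'D] sAB[OF b'D] ee spn_add[OF rS] by metis
          qed
        qed
      qed
    qed
  qed
qed




lemma card_split:
  assumes "S \<subseteq> {..<2*N}" "length a = N" "length b = N"
  shows "card {j\<in>S. (a@b)!j} = card {j\<in>{j\<in>S. j < N}. a!j} + card {j\<in>{j. j + N \<in> S}. b!j}"
proof -
  have fS: "finite S" using assms(1) finite_subset by blast
  have e: "{j\<in>S. (a@b)!j} = {j\<in>{j\<in>S. j < N}. a!j} \<union> (\<lambda>j. j + N) ` {j\<in>{j. j + N \<in> S}. b!j}"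
  proof (rule set_eqI)
    fix j show "j \<in> {j\<in>S. (a@b)!j} \<longleftrightarrow> j \<in> {j\<in>{j\<in>S. j < N}. a!j} \<union> (\<lambda>j. j + N) ` {j\<in>{j. j + N \<in> S}. b!j}"
      using assms by (cases "j < N") (auto simp: nth_append image_iff intro!: exI[of _ "j - N"])
  qed
  have f2: "finite {j\<in>{j. j + N \<in> S}. b!j}"
  proof -
    have "{j\<in>{j. j + N \<in> S}. b!j} \<subseteq> {..<2*N}" using assms(1) by auto
    then show ?thesis using finite_subset by blast
  qed
  have "card ({j\<in>{j\<in>S. j < N}. a!j} \<union> (\<lambda>j. j + N) ` {j\<in>{j. j + N \<in> S}. b!j})
      = card {j\<in>{j\<in>S. j < N}. a!j} + card ((\<lambda>j. j + N) ` {j\<in>{j. j + N \<in> S}. b!j})"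
    by (rule card_Un_disjoint) (use fS f2 in auto)
  moreover have "card ((\<lambda>j. j + N) ` {j\<in>{j. j + N \<in> S}. b!j}) = card {j\<in>{j. j + N \<in> S}. b!j}"
    by (rule card_image) (auto simp: inj_on_def)
  ultimately show ?thesis unfolding e by simp
qed

lemma card_zs: "T \<subseteq> {..<N} \<Longrightarrow> {j\<in>T. zs N ! j} = {}" by auto

lemma stop_Hm: "r \<le> m \<Longrightarrow> S \<subseteq> {..<2^m} \<Longrightarrow> S \<noteq> {} \<Longrightarrow> card S < 2^(m-r)
   \<Longrightarrow> \<exists>h\<in>set (Hm r m). card {j\<in>S. h!j} = 1"
proof (induction m arbitrary: r S)
  case 0
  then have "finite S" using finite_subset by blast
  then show ?case using 0 by simp
next
  case (Suc m)
  have fS: "finite S" using Suc.prems(2) finite_subset by blast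
  show ?case
  proof (cases "r = Suc m")
    case True then show ?thesis using Suc.prems fS by simp
  next
    case False
    then have rm: "r \<le> m" using Suc.prems by simp
    define N where "N = (2::nat)^m"
    define S1 where "S1 = {j\<in>S. j < N}"
    define S2 where "S2 = {j. j + N \<in> S}"
    have SS: "S \<subseteq> {..<2*N}" using Suc.prems(2) by (simp add: N_def)
    have S1s: "S1 \<subseteq> {..<2^m}" and S2s: "S2 \<subseteq> {..<2^m}" using SS by (auto simp: S1_def S2_def N_def)
    have cs: "card {j\<in>S. (a@b)!j} = card {j\<in>S1. a!j} + card {j\<in>S2. b!j}"
      if "length a = N" "length b = N" for a b
      unfolding S1_def S2_def by (rule card_split[OF SS that])
    have cS: "card S = card S1 + card S2"
    proof -
      have "card {j\<in>S. (replicate N True @ replicate N True)!j} = card S1 + card S2"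
      proof -
        have t: "{j\<in>T. replicate N True ! j} = T" if "T \<subseteq> {..<N}" for T
          using that by auto
        show ?thesis using cs[of "replicate N True" "replicate N True"] t[of S1] t[of S2] S1s S2s
          by (simp add: N_def)
      qed
      moreover have "{j\<in>S. (replicate N True @ replicate N True)!j} = S"
        using SS by (auto simp: nth_append)
      ultimately show ?thesis by simp
    qed
    have z1: "card {j\<in>S1. zs N ! j} = 0" and z2: "card {j\<in>S2. zs N ! j} = 0"
    proof -
      have e1: "{j\<in>S1. zs N ! j} = {}" and e2: "{j\<in>S2. zs N ! j} = {}" using card_zs[OF S1s] card_zs[OF S2s] by (simp_all only: N_def)
      show "card {j\<in>S1. zs N ! j} = 0" unfolding e1 by simp
      show "card {j\<in>S2. zs N ! j} = 0" unfolding e2 by simp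
    qed
    have HS: "Hm r (Suc m) = map (\<lambda>y. y @ zs N) (Hm r m) @ map (\<lambda>y. zs N @ y) (Hm r m) @
     map (\<lambda>x. x @ x) (if r = 0 then [e0 N] else Hm (r-1) m)" using rm unfolding N_def
      by (simp only: Hm.simps(2)) simp
    have hl: "length h = N" if "h \<in> set (Hm r' m)" for h r'
      using Hm_len that by (auto simp: rowsn_def N_def)
    have pw: "2^(Suc m - r) = 2 * (2::nat)^(m-r)" using rm by (simp add: Suc_diff_le)
    show ?thesis
    proof (cases "S1 \<noteq> {} \<and> card S1 < 2^(m-r)")
      case True
      then obtain y where y: "y \<in> set (Hm r m)" "card {j\<in>S1. y!j} = 1" using Suc.IH[OF rm S1s] by blast
      have "card {j\<in>S. (y @ zs N)!j} = 1" using cs[of y "zs N"] y hl z2 by simp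
      moreover have "y @ zs N \<in> set (Hm r (Suc m))" unfolding HS using y by auto
      ultimately show ?thesis by blast
    next
      case F1: False
      show ?thesis
      proof (cases "S2 \<noteq> {} \<and> card S2 < 2^(m-r)")
        case True
        then obtain y where y: "y \<in> set (Hm r m)" "card {j\<in>S2. y!j} = 1" using Suc.IH[OF rm S2s] by blast
        have "card {j\<in>S. (zs N @ y)!j} = 1" using cs[of "zs N" y] y hl z1 by simp
        moreover have "zs N @ y \<in> set (Hm r (Suc m))" unfolding HS using y by auto
        ultimately show ?thesis by blast
      next
        case F2: False
        have one: "(S1 = {} \<and> S2 \<noteq> {}) \<or> (S2 = {} \<and> S1 \<noteq> {})"
        proof -
          have "S1 \<noteq> {} \<or> S2 \<noteq> {}"
          proof -
            obtain x where x: "x \<in> S" using Suc.prems(3) by blast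
            show ?thesis
            proof (cases "x < N")
              case True then show ?thesis using x by (auto simp: S1_def)
            next
              case False
              then have "x - N + N \<in> S" using x by simp
              then show ?thesis by (auto simp: S2_def)
            qed
          qed
          moreover have "\<not> (S1 \<noteq> {} \<and> S2 \<noteq> {})"
            using F1 F2 cS Suc.prems(4) pw by auto
          ultimately show ?thesis by blast
        qed
        have xx: "card {j\<in>S. (x @ x)!j} = card {j\<in>S1. x!j} + card {j\<in>S2. x!j}" if "length x = N" for x
          using cs that by simp
        show ?thesis
        proof (cases "r = 0")
          case False
          have rm1: "r - 1 \<le> m" using rm by simp
          have pw1: "m - (r-1) = Suc m - r" using False rm by simp
          have "\<exists>x\<in>set (Hm (r-1) m). card {j\<in>S1. x!j} + card {j\<in>S2. x!j} = 1"
          proof (cases "S1 = {}")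
            case True
            then have "S2 \<noteq> {}" "card S2 < 2^(m-(r-1))" using one cS Suc.prems(4) pw1 by auto
            then obtain x where "x \<in> set (Hm (r-1) m)" "card {j\<in>S2. x!j} = 1"
              using Suc.IH[OF rm1 S2s] by blast
            then show ?thesis using True by auto
          next
            case nT: False
            then have "S2 = {}" "card S1 < 2^(m-(r-1))" using one cS Suc.prems(4) pw1 by auto
            then obtain x where "x \<in> set (Hm (r-1) m)" "card {j\<in>S1. x!j} = 1"
              using Suc.IH[OF rm1 S1s] nT by blast
            then show ?thesis using \<open>S2 = {}\<close> by auto
          qed
          then obtain x where x: "x \<in> set (Hm (r-1) m)" "card {j\<in>S1. x!j} + card {j\<in>S2. x!j} = 1" by blast
          have "x @ x \<in> set (Hm r (Suc m))" unfolding HS using x False by auto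
          then show ?thesis using xx[OF hl[OF x(1)]] x(2) by metis
        next
          case True
          have el: "length (e0 N) = N" by (simp add: e0_def)
          have full: "T = {..<N}" if "T \<subseteq> {..<N}" "\<not> card T < N" for T :: "nat set"
          proof -
            have "card T \<le> card {..<N}" using that(1) by (intro card_mono) auto
            then have "card T = card {..<N}" using that(2) by simp
            then show ?thesis using that(1) by (simp add: card_subset_eq)
          qed
          have e0c: "card {j\<in>{..<N}. e0 N ! j} = 1"
          proof -
            have "{j\<in>{..<N}. e0 N ! j} = {0}" by (auto simp: e0_def N_def)
            then show ?thesis by simp
          qed
          have "card {j\<in>S1. e0 N!j} + card {j\<in>S2. e0 N!j} = 1"
          proof (cases "S1 = {}")
            case True
            then have "S2 = {..<N}" using one F2 full S2s True \<open>r = 0\<close> by (simp add: N_def)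
            then show ?thesis using True e0c by simp
          next
            case False
            then have "S1 = {..<N}" using one F1 full S1s \<open>r = 0\<close> by (simp add: N_def)
            moreover have "S2 = {}" using one False by blast
            ultimately show ?thesis using e0c by simp
          qed
          moreover have "e0 N @ e0 N \<in> set (Hm r (Suc m))" unfolding HS using True by auto
          ultimately show ?thesis using xx[OF el] by metis
        qed
      qed
    qed
  qed
qed




definition FF :: "nat \<Rightarrow> nat \<Rightarrow> nat" where
  "FF r k = (\<Sum>i = 0..<k. ((r + i) choose i) * 2 ^ i)"

lemma FF_rec: "FF r (Suc k) = 2 * FF r k + (if r = 0 then 1 else FF (r-1) (Suc k))"
proof (induction k)
  case 0 then show ?case by (simp add: FF_def)
next
  case (Suc k)
  have s: "FF r' (Suc (Suc k)) = FF r' (Suc k) + ((r' + Suc k) choose Suc k) * 2 ^ Suc k" for r'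
    by (simp add: FF_def)
  show ?case
  proof (cases "r = 0")
    case True
    then show ?thesis using Suc s[of 0] s[of r] by (simp add: FF_def)
  next
    case False
    have b: "(r + Suc k) choose Suc k = ((r + k) choose k) + ((r + k) choose Suc k)"
      by simp
    have b2: "r - 1 + Suc k = r + k" using False by simp
    have "FF r (Suc (Suc k)) = 2 * FF r k + FF (r-1) (Suc k) + ((r + Suc k) choose Suc k) * 2 ^ Suc k"
      using Suc False s[of r] by simp
    also have "\<dots> = 2 * FF r (Suc k) + FF (r-1) (Suc (Suc k))"
      using s[of "r-1"] b b2 by (simp add: FF_def algebra_simps)
    finally show ?thesis using False by simp
  qed
qed

lemma Hm_length: "r \<le> m \<Longrightarrow> length (Hm r m) = FF r (m - r)"
proof (induction m arbitrary: r)
  case 0 then show ?case by (simp add: FF_def)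
next
  case (Suc m)
  show ?case
  proof (cases "r = Suc m")
    case True then show ?thesis by (simp add: FF_def)
  next
    case False
    then have rm: "r \<le> m" using Suc.prems by simp
    have H: "length (Hm r (Suc m)) = 2 * length (Hm r m) + (if r = 0 then 1 else length (Hm (r-1) m))"
      using rm by (simp only: Hm.simps(2)) simp
    have e: "Suc m - r = Suc (m - r)" using rm by simp
    show ?thesis
    proof (cases "r = 0")
      case True then show ?thesis using H Suc.IH[OF rm] e FF_rec[of r "m-r"] by simp
    next
      case False
      have "m - (r-1) = Suc (m - r)" using False rm by simp
      then show ?thesis using H Suc.IH[OF rm] Suc.IH[of "r-1"] rm e FF_rec[of r "m-r"] False by simp
    qed
  qed
qed

lemma hw_card: "hweight w = card {i. i < length w \<and> w!i}"
  by (simp add: hweight_def length_filter_conv_card)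

lemma cw: "r \<le> m \<Longrightarrow> \<exists>w\<in>CC r m. hweight w = 2^(m-r)"
proof (induction m arbitrary: r)
  case 0
  then show ?case using CC0[of 0] by (auto simp: hweight_def)
next
  case (Suc m)
  show ?case
  proof (cases "r = 0")
    case True
    then show ?thesis using CC0[of "Suc m"] by (auto simp: hweight_def)
  next
    case r0: False
    show ?thesis
    proof (cases "r = Suc m")
      case True
      let ?e = "map (\<lambda>i. 0 = i) [0..<2^Suc m]"
      have "?e \<in> set (identity_rows (2^Suc m))" unfolding identity_rows_def set_map
        by (rule image_eqI[where x=0]) auto
      then have "?e \<in> set (RM_gen r (Suc m))" using True by (simp only: RM_gen_mm)
      then have "?e \<in> CC r (Suc m)" using spn_row RM_gen_len by blast
      moreover have "hweight ?e = 1"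
      proof -
        have e: "{i. i < length ?e \<and> ?e!i} = {0}" by auto
        show ?thesis unfolding hw_card e by simp
      qed
      ultimately show ?thesis using True by auto
    next
      case False
      then have rm: "r \<le> m" using Suc.prems by simp
      obtain w where w: "w \<in> CC (r-1) m" "hweight w = 2^(m-(r-1))" using Suc.IH[of "r-1"] rm by (meson diff_le_self le_trans)
      have "zs (2^m) @ w \<in> CC r (Suc m)" using C_shift[OF _ rm w(1)] r0 by simp
      moreover have "hweight (zs (2^m) @ w) = 2^(Suc m - r)" using w(2) r0 rm
        by (simp add: hweight_def Suc_diff_le)
      ultimately show ?thesis by blast
    qed
  qed
qed

theorem theorem14:
  fixes m r :: nat
  assumes "1 \<le> m" and "r \<le> m"
  shows "stopping_redundancy (2 ^ m) (RM_code r m)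
           \<le> (\<Sum>i = 0..<m - r. ((r + i) choose i) * 2 ^ i)"
proof -
  let ?n = "2^m :: nat"
  let ?H = "Hm r m"
  define d where "d = min_distance ?n (RM_code r m)"
  have C: "RM_code r m = CC r m" by (rule RM_code_spn)
  obtain w where w: "w \<in> CC r m" "hweight w = 2^(m-r)" using cw[OF assms(2)] by blast
  have hz: "hweight (zs k) = 0" for k by (simp add: hweight_def)
  have wnz: "w \<noteq> zs ?n" using w(2) hz by (metis power_not_zero zero_neq_numeral)
  have ex: "\<exists>c\<in>RM_code r m. c \<noteq> zs ?n \<and> hweight c = 2^(m-r)" using w wnz C by blast
  have dle: "d \<le> 2^(m-r)" unfolding d_def min_distance_def by (rule Least_le) (use ex in blast)
  have "\<exists>c\<in>RM_code r m. c \<noteq> zs ?n \<and> hweight c = d" unfolding d_def min_distance_def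
    by (rule LeastI_ex) (use ex in blast)
  then obtain c where c: "c \<in> CC r m" "c \<noteq> zs ?n" "hweight c = d" using C by auto
  have cl: "length c = ?n" using c(1) CC_len by blast
  have Hl: "\<forall>h\<in>set ?H. length h = ?n" using Hm_len by (simp add: rowsn_def)
  have HD: "h \<in> DD r m" if "h \<in> set ?H" for h
    using Hm_span[OF assms(2)] spn_row[OF Hm_len that] by blast
  have pc: "is_parity_check ?n (RM_code r m) ?H"
    unfolding is_parity_check_def using Hl row_space_spn[OF Hm_len] Hm_span[OF assms(2)] C by simp
  have so: "stop_ok ?n ?H d"
    unfolding stop_ok_def
  proof (intro allI impI)
    fix S assume S: "S \<subseteq> {..<?n} \<and> S \<noteq> {} \<and> card S \<le> d - 1"
    have "finite S" using S finite_subset by blast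
    then have "card S > 0" using S by auto
    then have "card S < 2^(m-r)" using S dle by linarith
    then show "\<exists>h\<in>set ?H. card {j \<in> S. h ! j} = 1" using stop_Hm[OF assms(2)] S by blast
  qed
  have nso: "\<not> stop_ok ?n ?H (Suc d)"
  proof
    assume a: "stop_ok ?n ?H (Suc d)"
    let ?S = "{j. j < ?n \<and> c!j}"
    have Ssub: "?S \<subseteq> {..<?n}" by auto
    have Sne: "?S \<noteq> {}"
    proof
      assume "?S = {}"
      then have "c = zs ?n" using cl by (intro nth_equalityI) auto
      then show False using c(2) by simp
    qed
    have Sc: "card ?S = d" using c(3) cl hw_card[of c] by simp
    have "\<exists>h\<in>set ?H. card {j \<in> ?S. h ! j} = 1"
      using a[unfolded stop_ok_def, rule_format, of ?S] Ssub Sne Sc by simp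
    then obtain h where h: "h \<in> set ?H" "card {j \<in> ?S. h ! j} = 1" by blast
    have "\<not> gi c h" using HD[OF h(1)] c(1) by (auto simp: dual_code_def)
    moreover have "{j \<in> ?S. h ! j} = {i. i < length c \<and> c!i \<and> h!i}" using cl by auto
    ultimately show False using h(2) unfolding gf2_inner_def by simp
  qed
  have "stopping_redundancy ?n (RM_code r m) \<le> length ?H"
    unfolding stopping_redundancy_def
    by (rule Least_le) (use pc so nso in \<open>auto simp: stopping_distance_is_def d_def\<close>)
  also have "\<dots> = FF r (m - r)" by (rule Hm_length[OF assms(2)])
  finally show ?thesis by (simp add: FF_def)
qed


end
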